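(* Let $Q$ be a quadrilateral in $K^2$. (1) The midpoint $\mathrm{mid}_Q(\ell)$ is finite (not at infinity) for all bisectors $\ell$ of $Q$. (2) A line $\ell$ passing through a vertex of $Q$ bisects $Q$ if and only if it is a side of $Q$ or a diagonal of $Q$. (3) Two distinct parallel lines are bisectors of $Q$ if and only if these lines are parallel to a pair of parallel sides of $Q$ or to the diagonals of $Q$ when these are parallel. (4) All lines parallel to a pair of parallel sides of $Q$, or to the diagonals of $Q$ when these are parallel, bisect $Q$.
   Context: $K$ is a field of characteristic $\neq 2$; we work in $K^2$ inside the projective plane. A quadrilateral $Q=ABA'B'$ consists of four distinct lines $A,B,A',B'$ (sides), not all through one point, with adjacent sides ($A,B$; $B,A'$; $A',B'$; $B',A$) not parallel; opposite sides ($A,A'$; $B,B'$) may be parallel. Vertices: $A\cap B$, $B\cap A'$, $A'\cap B'$, $B'\cap A$ (two may coincide if three sides are concurrent). Diagonals: the lines through nonadjacent vertices. Here "parallel to" a line includes being equal to it. A line $\ell$ crosses a pair $\{\ell_1,\ell_2\}$ if it is distinct from both and not parallel to both; $\mathrm{mid}_{\{\ell_1,\ell_2\}}(\ell)$ is the midpoint of the points where $\ell$ meets $\ell_1,\ell_2$, defined to be the point at infinity of $\ell$ if one of these points is at infinity. $\ell$ bisects $Q$ (is a bisector of $Q$) if $\mathrm{mid}_{\mathsf P}(\ell)$ is the same for all pairs $\mathsf P$ among $\{A,A'\},\{B,B'\}$ that $\ell$ crosses; this common point is $\mathrm{mid}_Q(\ell)$, the midpoint of the bisector. *)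

theory Defs
  imports Main
begin

text \<open>Affine plane K^2 is modelled as the type 'k \<times> 'k for a field 'k.
  A line is the zero set of a x + b y = c with (a,b) \<noteq> (0,0).\<close>

definition is_line :: "('k::field \<times> 'k) set \<Rightarrow> bool" where
  "is_line L \<longleftrightarrow> (\<exists>a b c. (a \<noteq> 0 \<or> b \<noteq> 0) \<and> L = {p. a * fst p + b * snd p = c})"

text \<open>Direction of a line: the parallel line through the origin.\<close>
definition dir :: "('k::field \<times> 'k) set \<Rightarrow> ('k \<times> 'k) set" where
  "dir L = {(fst u - fst v, snd u - snd v) | u v. u \<in> L \<and> v \<in> L}"

text \<open>Parallel (includes equality).\<close>
definition parallel :: "('k::field \<times> 'k) set \<Rightarrow> ('k \<times> 'k) set \<Rightarrow> bool" where
  "parallel L M \<longleftrightarrow> dir L = dir M"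

text \<open>Points of the projective plane: finite points, or points at infinity
  (identified with a direction).\<close>
datatype 'k ppoint = Fin "'k \<times> 'k" | Infty "('k \<times> 'k) set"

definition meet :: "('k::field \<times> 'k) set \<Rightarrow> ('k \<times> 'k) set \<Rightarrow> 'k ppoint" where
  "meet l m = (if parallel l m then Infty (dir l) else Fin (THE p. p \<in> l \<and> p \<in> m))"

definition midpt :: "'k::field \<times> 'k \<Rightarrow> 'k \<times> 'k \<Rightarrow> 'k \<times> 'k" where
  "midpt p q = ((fst p + fst q) / 2, (snd p + snd q) / 2)"

definition mid :: "('k::field \<times> 'k) set \<Rightarrow> ('k \<times> 'k) set \<Rightarrow> ('k \<times> 'k) set \<Rightarrow> 'k ppoint" where
  "mid l l1 l2 = (case (meet l l1, meet l l2) of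
      (Fin p, Fin q) \<Rightarrow> Fin (midpt p q)
    | _ \<Rightarrow> Infty (dir l))"

definition crosses :: "('k::field \<times> 'k) set \<Rightarrow> ('k \<times> 'k) set \<Rightarrow> ('k \<times> 'k) set \<Rightarrow> bool" where
  "crosses l l1 l2 \<longleftrightarrow> l \<noteq> l1 \<and> l \<noteq> l2 \<and> \<not> (parallel l l1 \<and> parallel l l2)"

definition line_through :: "'k::field \<times> 'k \<Rightarrow> 'k \<times> 'k \<Rightarrow> ('k \<times> 'k) set" where
  "line_through p q = {r. \<exists>t. r = (fst p + t * (fst q - fst p), snd p + t * (snd q - snd p))}"

text \<open>Quadrilateral ABA'B' with sides A, B, A', B' (in this cyclic order).\<close>
definition quadrilateral :: "('k::field \<times> 'k) set \<Rightarrow> ('k \<times> 'k) set \<Rightarrow> ('k \<times> 'k) set \<Rightarrow> ('k \<times> 'k) set \<Rightarrow> bool" where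
  "quadrilateral A B A' B' \<longleftrightarrow>
     is_line A \<and> is_line B \<and> is_line A' \<and> is_line B' \<and>
     distinct [A, B, A', B'] \<and>
     \<not> (\<exists>p. p \<in> A \<and> p \<in> B \<and> p \<in> A' \<and> p \<in> B') \<and>
     \<not> parallel A B \<and> \<not> parallel B A' \<and> \<not> parallel A' B' \<and> \<not> parallel B' A"

definition vtx :: "('k::field \<times> 'k) set \<Rightarrow> ('k \<times> 'k) set \<Rightarrow> 'k \<times> 'k" where
  "vtx L M = (THE p. p \<in> L \<and> p \<in> M)"

definition vertices :: "('k::field \<times> 'k) set \<Rightarrow> ('k \<times> 'k) set \<Rightarrow> ('k \<times> 'k) set \<Rightarrow> ('k \<times> 'k) set \<Rightarrow> ('k \<times> 'k) set" where
  "vertices A B A' B' = {vtx A B, vtx B A', vtx A' B', vtx B' A}"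

definition diag1 :: "('k::field \<times> 'k) set \<Rightarrow> ('k \<times> 'k) set \<Rightarrow> ('k \<times> 'k) set \<Rightarrow> ('k \<times> 'k) set \<Rightarrow> ('k \<times> 'k) set" where
  "diag1 A B A' B' = line_through (vtx A B) (vtx A' B')"

definition diag2 :: "('k::field \<times> 'k) set \<Rightarrow> ('k \<times> 'k) set \<Rightarrow> ('k \<times> 'k) set \<Rightarrow> ('k \<times> 'k) set \<Rightarrow> ('k \<times> 'k) set" where
  "diag2 A B A' B' = line_through (vtx B A') (vtx B' A)"

definition bisects :: "('k::field \<times> 'k) set \<Rightarrow> ('k \<times> 'k) set \<Rightarrow> ('k \<times> 'k) set \<Rightarrow> ('k \<times> 'k) set \<Rightarrow> ('k \<times> 'k) set \<Rightarrow> bool" where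
  "bisects A B A' B' l \<longleftrightarrow> is_line l \<and>
     (crosses l A A' \<and> crosses l B B' \<longrightarrow> mid l A A' = mid l B B')"

definition midQ :: "('k::field \<times> 'k) set \<Rightarrow> ('k \<times> 'k) set \<Rightarrow> ('k \<times> 'k) set \<Rightarrow> ('k \<times> 'k) set \<Rightarrow> ('k \<times> 'k) set \<Rightarrow> 'k ppoint" where
  "midQ A B A' B' l = (if crosses l A A' then mid l A A' else mid l B B')"

end

theory Submission
  imports Defs
begin

abbreviation Lc :: "'k::field \<Rightarrow> 'k \<Rightarrow> 'k \<Rightarrow> ('k \<times> 'k) set" where
  "Lc a b c \<equiv> {p. a * fst p + b * snd p = c}"

lemma dir_Lc:
  fixes a b c :: "'k::field"
  assumes "a \<noteq> 0 \<or> b \<noteq> 0"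
  shows "dir (Lc a b c) = {w. a * fst w + b * snd w = 0}"
proof (rule set_eqI, rule iffI)
  fix w assume "w \<in> dir (Lc a b c)"
  then obtain u v where "w = (fst u - fst v, snd u - snd v)" "u \<in> Lc a b c" "v \<in> Lc a b c"
    unfolding dir_def by blast
  then show "w \<in> {w. a * fst w + b * snd w = 0}" by (simp add: algebra_simps)
next
  fix w assume w: "w \<in> {w. a * fst w + b * snd w = 0}"
  obtain q where q: "q \<in> Lc a b c"
  proof (cases "a = 0")
    case True
    then have "b \<noteq> 0" using assms by simp
    then show ?thesis using that[of "(0, c / b)"] True by simp
  next
    case False
    then show ?thesis using that[of "(c / a, 0)"] by simp
  qed
  define p where "p = (fst q + fst w, snd q + snd w)"
  have "p \<in> Lc a b c" using q w unfolding p_def by (simp add: algebra_simps)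
  moreover have "w = (fst p - fst q, snd p - snd q)" unfolding p_def by simp
  ultimately show "w \<in> dir (Lc a b c)" using q unfolding dir_def by blast
qed

lemma par_Lc:
  fixes a b c a' b' c' :: "'k::field"
  assumes "a \<noteq> 0 \<or> b \<noteq> 0" "a' \<noteq> 0 \<or> b' \<noteq> 0"
  shows "parallel (Lc a b c) (Lc a' b' c') \<longleftrightarrow> a * b' = a' * b"
proof
  assume "parallel (Lc a b c) (Lc a' b' c')"
  then have eq: "{w. a * fst w + b * snd w = 0} = {w::'k\<times>'k. a' * fst w + b' * snd w = 0}"
    unfolding parallel_def using dir_Lc[OF assms(1)] dir_Lc[OF assms(2)] by simp
  have "(b, -a) \<in> {w. a * fst w + b * snd w = 0}" by (simp add: algebra_simps)
  then have "(b, -a) \<in> {w. a' * fst w + b' * snd w = 0}" using eq by simp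
  then show "a * b' = a' * b" by (simp add: algebra_simps)
next
  assume h: "a * b' = a' * b"
  have "{w. a * fst w + b * snd w = 0} = {w::'k\<times>'k. a' * fst w + b' * snd w = 0}"
  proof (rule set_eqI)
    fix w :: "'k \<times> 'k"
    obtain u v where w: "w = (u, v)" by (cases w)
    show "w \<in> {w. a * fst w + b * snd w = 0} \<longleftrightarrow> w \<in> {w. a' * fst w + b' * snd w = 0}"
    proof (cases "a = 0")
      case True
      then have "b \<noteq> 0" using assms by simp
      then have "a' = 0" using h True by simp
      then have "b' \<noteq> 0" using assms by simp
      then show ?thesis using True \<open>a' = 0\<close> \<open>b \<noteq> 0\<close> w by simp
    next
      case False
      show ?thesis
      proof (cases "a' = 0")
        case True
        then have "b' \<noteq> 0" using assms by simp
        then show ?thesis using h True False by simp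
      next
        case F2: False
        have "a * u + b * v = 0 \<longleftrightarrow> u = - b * v / a" using False by (auto simp: field_simps eq_neg_iff_add_eq_0)
        moreover have "a' * u + b' * v = 0 \<longleftrightarrow> u = - b' * v / a'" using F2 by (auto simp: field_simps eq_neg_iff_add_eq_0)
        moreover have "b / a = b' / a'" using h False F2 by (simp add: field_simps)
        moreover have "- b * v / a = - (b / a) * v" "- b' * v / a' = - (b' / a') * v" by simp_all
        ultimately show ?thesis using w by simp
      qed
    qed
  qed
  then show "parallel (Lc a b c) (Lc a' b' c')"
    unfolding parallel_def using dir_Lc[OF assms(1)] dir_Lc[OF assms(2)] by simp
qed

lemma lineE:
  assumes "is_line L"
  obtains a b c where "a \<noteq> 0 \<or> b \<noteq> 0" "L = Lc a b c"
  using assms unfolding is_line_def by blast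

lemma Lc_line: "(a::'k::field) \<noteq> 0 \<or> b \<noteq> 0 \<Longrightarrow> is_line (Lc a b c)"
  unfolding is_line_def by blast

lemma line_translate:
  assumes "is_line L" "p0 \<in> L"
  shows "q \<in> L \<longleftrightarrow> (fst q - fst p0, snd q - snd p0) \<in> dir L"
proof -
  obtain a b c where ab: "a \<noteq> 0 \<or> b \<noteq> 0" and L: "L = Lc a b c" using assms(1) by (rule lineE)
  have "a * fst p0 + b * snd p0 = c" using assms(2) L by simp
  then show ?thesis unfolding L dir_Lc[OF ab] by (auto simp: algebra_simps)
qed

lemma par_refl: "parallel L L" unfolding parallel_def by simp
lemma par_sym: "parallel L M \<Longrightarrow> parallel M L" unfolding parallel_def by simp
lemma par_trans: "parallel L M \<Longrightarrow> parallel M N \<Longrightarrow> parallel L N" unfolding parallel_def by simp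

lemma par_common_eq:
  assumes "is_line L" "is_line M" "parallel L M" "p \<in> L" "p \<in> M"
  shows "L = M"
  using line_translate[OF assms(1,4)] line_translate[OF assms(2,5)] assms(3)
  unfolding parallel_def by blast

lemma meet_ex1:
  fixes L M :: "('k::field \<times> 'k) set"
  assumes "is_line L" "is_line M" "\<not> parallel L M"
  shows "\<exists>!p. p \<in> L \<and> p \<in> M"
proof -
  obtain a b c where ab: "a \<noteq> 0 \<or> b \<noteq> 0" and L: "L = Lc a b c" using assms(1) by (rule lineE)
  obtain a' b' c' where ab': "a' \<noteq> 0 \<or> b' \<noteq> 0" and M: "M = Lc a' b' c'" using assms(2) by (rule lineE)
  have D: "a * b' - a' * b \<noteq> 0" using assms(3) par_Lc[OF ab ab'] L M by simp
  define p where "p = ((c * b' - c' * b) / (a * b' - a' * b), (a * c' - a' * c) / (a * b' - a' * b))"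
  have dv: "\<And>u v x y d. u * (x / d) + v * (y / d) = (u * x + v * y) / (d::'k)"
    by (simp add: add_divide_distrib)
  have "a * fst p + b * snd p = (c * (a * b' - a' * b)) / (a * b' - a' * b)"
    unfolding p_def fst_conv snd_conv dv by (simp add: algebra_simps)
  then have pL: "p \<in> L" unfolding L using D by simp
  have "a' * fst p + b' * snd p = (c' * (a * b' - a' * b)) / (a * b' - a' * b)"
    unfolding p_def fst_conv snd_conv dv by (simp add: algebra_simps)
  then have pM: "p \<in> M" unfolding M using D by simp
  have "q = p" if "q \<in> L" "q \<in> M" for q
  proof -
    have e1: "a * (fst q - fst p) + b * (snd q - snd p) = 0" using that pL L by (simp add: algebra_simps)
    have e2: "a' * (fst q - fst p) + b' * (snd q - snd p) = 0" using that pM M by (simp add: algebra_simps)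
    have "(a * b' - a' * b) * (fst q - fst p) = b' * (a * (fst q - fst p) + b * (snd q - snd p)) - b * (a' * (fst q - fst p) + b' * (snd q - snd p))"
      by (simp add: algebra_simps)
    then have "fst q = fst p" using e1 e2 D by simp
    moreover have "(a * b' - a' * b) * (snd q - snd p) = a * (a' * (fst q - fst p) + b' * (snd q - snd p)) - a' * (a * (fst q - fst p) + b * (snd q - snd p))"
      by (simp add: algebra_simps)
    then have "snd q = snd p" using e1 e2 D by simp
    ultimately show ?thesis by (simp add: prod_eq_iff)
  qed
  then show ?thesis using pL pM by blast
qed

lemma two_points:
  assumes "is_line L" "p \<noteq> q" "p \<in> L" "q \<in> L"
  shows "L = line_through p q"
proof -
  obtain a b c where ab: "a \<noteq> 0 \<or> b \<noteq> 0" and L: "L = Lc a b c" using assms(1) by (rule lineE)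
  have hp: "a * fst p + b * snd p = c" and hq: "a * fst q + b * snd q = c" using assms L by auto
  have kq: "a * (fst q - fst p) + b * (snd q - snd p) = 0" using hp hq by (simp add: algebra_simps)
  show ?thesis
  proof (rule set_eqI, rule iffI)
    fix r assume "r \<in> L"
    then have kr: "a * (fst r - fst p) + b * (snd r - snd p) = 0" using hp L by (simp add: algebra_simps)
    show "r \<in> line_through p q"
    proof (cases "fst q = fst p")
      case False
      define t where "t = (fst r - fst p) / (fst q - fst p)"
      have b: "b \<noteq> 0" using kq False ab by auto
      have 1: "fst r = fst p + t * (fst q - fst p)" using False unfolding t_def by simp
      have e1: "snd r - snd p = - a * (fst r - fst p) / b" and e2: "snd q - snd p = - a * (fst q - fst p) / b"
        using kr kq b by (simp_all add: field_simps eq_neg_iff_add_eq_0)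
      have e3: "t * (- a * (fst q - fst p) / b) = - a * (fst r - fst p) / b"
        unfolding t_def using False b by (simp add: field_simps)
      have "t * (snd q - snd p) = snd r - snd p" by (simp only: e2 e3 e1)
      then have 2: "snd r = snd p + t * (snd q - snd p)" by (simp add: algebra_simps)
      show ?thesis unfolding line_through_def using 1 2 by (auto simp: prod_eq_iff)
    next
      case True
      then have F: "snd q \<noteq> snd p" using assms(2) by (auto simp: prod_eq_iff)
      define t where "t = (snd r - snd p) / (snd q - snd p)"
      have b: "b = 0" using kq True F by auto
      then have a: "a \<noteq> 0" using ab by simp
      have 2: "snd r = snd p + t * (snd q - snd p)" using F unfolding t_def by simp
      have "fst r = fst p" using kr a b by simp
      then have 1: "fst r = fst p + t * (fst q - fst p)" using True by simp
      show ?thesis unfolding line_through_def using 1 2 by (auto simp: prod_eq_iff)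
    qed
  next
    fix r assume "r \<in> line_through p q"
    then obtain t where "r = (fst p + t * (fst q - fst p), snd p + t * (snd q - snd p))"
      unfolding line_through_def by blast
    then have "a * fst r + b * snd r = (a * fst p + b * snd p) + t * (a * (fst q - fst p) + b * (snd q - snd p))"
      by (simp add: algebra_simps)
    then show "r \<in> L" using hp kq L by simp
  qed
qed

lemma line_through_props:
  assumes "p \<noteq> q"
  shows "is_line (line_through p q)" "p \<in> line_through p q" "q \<in> line_through p q"
proof -
  define a where "a = snd q - snd p"
  define b where "b = fst p - fst q"
  have ab: "a \<noteq> 0 \<or> b \<noteq> 0" using assms unfolding a_def b_def by (auto simp: prod_eq_iff)
  define L where "L = Lc a b (a * fst p + b * snd p)"
  have "p \<in> L" "q \<in> L" unfolding L_def a_def b_def by (auto simp: algebra_simps)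
  moreover have "is_line L" unfolding L_def by (rule Lc_line[OF ab])
  ultimately have "L = line_through p q" using two_points assms by blast
  then show "is_line (line_through p q)" "p \<in> line_through p q" "q \<in> line_through p q"
    using \<open>p \<in> L\<close> \<open>q \<in> L\<close> \<open>is_line L\<close> by auto
qed

lemma line_through_sym: "line_through p q = line_through q p"
proof (cases "p = q")
  case True then show ?thesis by simp
next
  case False
  show ?thesis using two_points[OF line_through_props(1)[OF False] not_sym[OF False]]
      line_through_props[OF False] by simp
qed

lemma inter_unique:
  assumes "is_line L" "is_line M" "L \<noteq> M" "p \<in> L" "p \<in> M" "q \<in> L" "q \<in> M"
  shows "p = q"
  using two_points[OF assms(1) _ assms(4,6)] two_points[OF assms(2) _ assms(5,7)] assms(3) by blast

lemma vtx_eq: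
  assumes "is_line L" "is_line M" "\<not> parallel L M" "p \<in> L" "p \<in> M"
  shows "vtx L M = p"
  unfolding vtx_def using meet_ex1[OF assms(1-3)] assms(4,5) by (metis (no_types, lifting) the_equality)

lemma vtx_in:
  assumes "is_line L" "is_line M" "\<not> parallel L M"
  shows "vtx L M \<in> L" "vtx L M \<in> M"
  using vtx_eq[OF assms] meet_ex1[OF assms] by auto

lemma vtx_sym: "vtx L M = vtx M L"
  unfolding vtx_def by (simp add: conj_commute)

lemma meet_fin:
  assumes "is_line l" "is_line L" "\<not> parallel l L" "p \<in> l" "p \<in> L"
  shows "meet l L = Fin p"
  using vtx_eq[OF assms] assms(3) unfolding meet_def vtx_def by simp

lemma meet_inf: "parallel l L \<Longrightarrow> meet l L = Infty (dir l)"
  unfolding meet_def by simp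

lemma mid_fin: "meet l L = Fin p \<Longrightarrow> meet l M = Fin q \<Longrightarrow> mid l L M = Fin (midpt p q)"
  unfolding mid_def by simp

lemma mid_inf: "parallel l L \<or> parallel l M \<Longrightarrow> mid l L M = Infty (dir l)"
  unfolding mid_def meet_def by auto

lemma midpt_sym: "midpt p q = midpt q p"
  unfolding midpt_def by (simp add: add.commute)

lemma mid_sym: "mid l L M = mid l M L"
  unfolding mid_def by (auto split: ppoint.split simp: midpt_sym)

lemma crosses_sym: "crosses l L M = crosses l M L"
  unfolding crosses_def by auto

lemma midpt_cancel:
  assumes "(2::'k::field) \<noteq> 0" "midpt p x = midpt p (y::'k \<times> 'k)"
  shows "x = y"
  using assms unfolding midpt_def by (auto simp: prod_eq_iff field_simps)

lemma mid_is_fin: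
  assumes "is_line l" "is_line L" "is_line M"
  shows "(\<exists>p. mid l L M = Fin p) \<longleftrightarrow> \<not> parallel l L \<and> \<not> parallel l M"
proof
  assume "\<exists>p. mid l L M = Fin p"
  then show "\<not> parallel l L \<and> \<not> parallel l M" using mid_inf[of l L M] by auto
next
  assume h: "\<not> parallel l L \<and> \<not> parallel l M"
  obtain p where "p \<in> l" "p \<in> L" using meet_ex1[OF assms(1,2)] h by blast
  obtain q where "q \<in> l" "q \<in> M" using meet_ex1[OF assms(1,3)] h by blast
  show "\<exists>p. mid l L M = Fin p"
    using mid_fin[OF meet_fin[OF assms(1,2)] meet_fin[OF assms(1,3)]] h \<open>p \<in> l\<close> \<open>p \<in> L\<close> \<open>q \<in> l\<close> \<open>q \<in> M\<close>
    by blast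
qed

lemma quadD:
  assumes "quadrilateral A B A' B'"
  shows "is_line A" "is_line B" "is_line A'" "is_line B'"
    "A \<noteq> B" "A \<noteq> A'" "A \<noteq> B'" "B \<noteq> A'" "B \<noteq> B'" "A' \<noteq> B'"
    "\<not> parallel A B" "\<not> parallel B A'" "\<not> parallel A' B'" "\<not> parallel B' A"
    "\<not> parallel B A" "\<not> parallel A' B" "\<not> parallel B' A'" "\<not> parallel A B'"
    "\<And>p. p \<in> A \<Longrightarrow> p \<in> B \<Longrightarrow> p \<in> A' \<Longrightarrow> p \<in> B' \<Longrightarrow> False"
  using assms unfolding quadrilateral_def by (auto dest: par_sym)

lemma quad_rot: "quadrilateral A B A' B' \<Longrightarrow> quadrilateral B A' B' A"
  unfolding quadrilateral_def by auto

lemma quad_refl: "quadrilateral A B A' B' \<Longrightarrow> quadrilateral B A B' A'"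
  unfolding quadrilateral_def by (auto dest: par_sym)

lemma bisects_rot: "bisects A B A' B' l = bisects B A' B' A l"
  unfolding bisects_def by (auto simp: crosses_sym mid_sym)

lemma bisects_refl: "bisects A B A' B' l = bisects B A B' A' l"
  unfolding bisects_def by auto

lemma diag_rot: "diag1 B A' B' A = diag2 A B A' B'" "diag2 B A' B' A = diag1 A B A' B'"
  unfolding diag1_def diag2_def by (simp_all add: line_through_sym)

lemma diag_refl: "diag1 B A B' A' = diag1 A B A' B'" "diag2 B A B' A' = diag2 A B A' B'"
  unfolding diag1_def diag2_def by (simp_all add: line_through_sym vtx_sym)

lemma vertices_rot: "vertices B A' B' A = vertices A B A' B'"
  unfolding vertices_def by auto

lemma quad_P13:
  assumes "quadrilateral A B A' B'"
  shows "vtx A B \<noteq> vtx A' B'" "is_line (diag1 A B A' B')"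
    "vtx A B \<in> diag1 A B A' B'" "vtx A' B' \<in> diag1 A B A' B'"
    "vtx A B \<in> A" "vtx A B \<in> B" "vtx A' B' \<in> A'" "vtx A' B' \<in> B'"
proof -
  note q = quadD[OF assms]
  show "vtx A B \<in> A" "vtx A B \<in> B" "vtx A' B' \<in> A'" "vtx A' B' \<in> B'"
    using vtx_in q by auto
  then show ne: "vtx A B \<noteq> vtx A' B'" using q(19) by metis
  show "is_line (diag1 A B A' B')" "vtx A B \<in> diag1 A B A' B'" "vtx A' B' \<in> diag1 A B A' B'"
    unfolding diag1_def using line_through_props[OF ne] by auto
qed

lemma part1:
  assumes Q: "quadrilateral A B A' B'" and bis: "bisects A B A' B' l"
  shows "\<exists>p. midQ A B A' B' l = Fin p"
proof -
  note q = quadD[OF Q]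
  have l: "is_line l" using bis unfolding bisects_def by simp
  show ?thesis
  proof (cases "crosses l A A'")
    case True
    have nA: "\<not> parallel l A"
    proof
      assume p: "parallel l A"
      have "crosses l B B'" using p q(11,18) unfolding crosses_def parallel_def by auto
      then have "mid l A A' = mid l B B'" using bis True unfolding bisects_def by simp
      moreover have "mid l A A' = Infty (dir l)" using mid_inf p by blast
      moreover have "\<not> parallel l B \<and> \<not> parallel l B'" using p q(11,18) unfolding parallel_def by auto
      ultimately show False using mid_is_fin[OF l q(2,4)] by auto
    qed
    have nA': "\<not> parallel l A'"
    proof
      assume p: "parallel l A'"
      have "crosses l B B'" using p q(16,13) unfolding crosses_def parallel_def by auto
      then have "mid l A A' = mid l B B'" using bis True unfolding bisects_def by simp
      moreover have "mid l A A' = Infty (dir l)" using mid_inf p by blast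
      moreover have "\<not> parallel l B \<and> \<not> parallel l B'" using p q(16,13) unfolding parallel_def by auto
      ultimately show False using mid_is_fin[OF l q(2,4)] by auto
    qed
    show ?thesis using True mid_is_fin[OF l q(1,3)] nA nA' unfolding midQ_def by simp
  next
    case False
    then have "parallel l A \<or> parallel l A'" unfolding crosses_def using par_refl by auto
    then have "\<not> parallel l B \<and> \<not> parallel l B'" using q(11,18,16,13) unfolding parallel_def by auto
    then show ?thesis using False mid_is_fin[OF l q(2,4)] unfolding midQ_def by simp
  qed
qed

lemma bis_cross_fin:
  assumes Q: "quadrilateral A B A' B'" and bis: "bisects A B A' B' l"
  shows "crosses l A A' \<Longrightarrow> \<not> parallel l A \<and> \<not> parallel l A'"
    and "crosses l B B' \<Longrightarrow> \<not> parallel l B \<and> \<not> parallel l B'"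
proof -
  note q = quadD[OF Q]
  have l: "is_line l" using bis unfolding bisects_def by simp
  obtain p where p: "midQ A B A' B' l = Fin p" using part1[OF Q bis] by blast
  show "crosses l A A' \<Longrightarrow> \<not> parallel l A \<and> \<not> parallel l A'"
    using p mid_is_fin[OF l q(1,3)] unfolding midQ_def by auto
  show "crosses l B B' \<Longrightarrow> \<not> parallel l B \<and> \<not> parallel l B'"
  proof -
    assume c: "crosses l B B'"
    have "mid l B B' = Fin p" using p c bis unfolding midQ_def bisects_def by (auto split: if_splits)
    then show ?thesis using mid_is_fin[OF l q(2,4)] by auto
  qed
qed

lemma V1:
  fixes l :: "('k::field \<times> 'k) set"
  assumes Q: "quadrilateral A B A' B'" and bis: "bisects A B A' B' l"
    and v: "vtx A B \<in> l" and c2: "(2::'k) \<noteq> 0"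
  shows "l \<in> {A, B, A', B', diag1 A B A' B'}"
proof (rule ccontr)
  assume nl: "l \<notin> {A, B, A', B', diag1 A B A' B'}"
  note q = quadD[OF Q]
  note P = quad_P13[OF Q]
  have l: "is_line l" using bis unfolding bisects_def by simp
  have nA: "\<not> parallel l A" using par_common_eq[OF l q(1) _ v P(5)] nl by auto
  have nB: "\<not> parallel l B" using par_common_eq[OF l q(2) _ v P(6)] nl by auto
  have cA: "crosses l A A'" using nA nl unfolding crosses_def by auto
  have cB: "crosses l B B'" using nB nl unfolding crosses_def by auto
  have nA': "\<not> parallel l A'" and nB': "\<not> parallel l B'"
    using bis_cross_fin[OF Q bis] cA cB by auto
  obtain X where X: "X \<in> l" "X \<in> A'" using meet_ex1[OF l q(3) nA'] by blast
  obtain Y where Y: "Y \<in> l" "Y \<in> B'" using meet_ex1[OF l q(4) nB'] by blast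
  have "mid l A A' = Fin (midpt (vtx A B) X)"
    using mid_fin[OF meet_fin[OF l q(1) nA v P(5)] meet_fin[OF l q(3) nA' X]] .
  moreover have "mid l B B' = Fin (midpt (vtx A B) Y)"
    using mid_fin[OF meet_fin[OF l q(2) nB v P(6)] meet_fin[OF l q(4) nB' Y]] .
  ultimately have "midpt (vtx A B) X = midpt (vtx A B) Y" using bis cA cB unfolding bisects_def by simp
  then have "X = Y" using midpt_cancel[OF c2] by blast
  then have "X = vtx A' B'" using vtx_eq[OF q(3,4,13)] X Y by simp
  then have "l = diag1 A B A' B'" unfolding diag1_def using two_points[OF l P(1) v] X by simp
  then show False using nl by simp
qed

lemma bis_through:
  assumes "is_line A" "is_line B" "is_line A'" "is_line B'" "is_line d"
    "P \<in> d" "P \<in> A" "P \<in> B" "R \<in> d" "R \<in> A'" "R \<in> B'"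
  shows "bisects A B A' B' d"
  unfolding bisects_def
proof (intro conjI impI)
  show "is_line d" by fact
  assume c: "crosses d A A' \<and> crosses d B B'"
  have n: "\<not> parallel d A" "\<not> parallel d B" "\<not> parallel d A'" "\<not> parallel d B'"
    using c par_common_eq assms unfolding crosses_def by metis+
  show "mid d A A' = mid d B B'"
    using mid_fin[OF meet_fin[OF assms(5,1) n(1) assms(6,7)] meet_fin[OF assms(5,3) n(3) assms(9,10)]]
      mid_fin[OF meet_fin[OF assms(5,2) n(2) assms(6,8)] meet_fin[OF assms(5,4) n(4) assms(9,11)]]
    by simp
qed

lemma bisects_swapA: "bisects A B A' B' l = bisects A' B A B' l"
  unfolding bisects_def by (auto simp: crosses_sym mid_sym)

lemma diag1_bis:
  assumes Q: "quadrilateral A B A' B'"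
  shows "bisects A B A' B' (diag1 A B A' B')"
  using bis_through[OF quadD(1-4)[OF Q] quad_P13(2-3,5-6)[OF Q] quad_P13(4,7-8)[OF Q]] .

lemma diag2_bis:
  assumes Q: "quadrilateral A B A' B'"
  shows "bisects A B A' B' (diag2 A B A' B')"
proof -
  have "bisects B A' B' A (diag1 B A' B' A)" using diag1_bis[OF quad_rot[OF Q]] .
  then show ?thesis using bisects_rot diag_rot by metis
qed

lemma sides_bis:
  assumes Q: "quadrilateral A B A' B'"
  shows "bisects A B A' B' A" "bisects A B A' B' B" "bisects A B A' B' A'" "bisects A B A' B' B'"
  using quadD(1-4)[OF Q] unfolding bisects_def crosses_def by simp_all

lemma lin_iff:
  fixes t :: "'k::field"
  shows "(t*k1+m1) + (t*k2+m2) = (t*k3+m3) + (t*k4+m4) \<longleftrightarrow> (k1+k2-k3-k4)*t + (m1+m2-m3-m4) = 0"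
proof -
  have "(t*k1+m1) + (t*k2+m2) - ((t*k3+m3) + (t*k4+m4)) = (k1+k2-k3-k4)*t + (m1+m2-m3-m4)"
    by (simp add: algebra_simps)
  then show ?thesis by (metis eq_iff_diff_eq_0)
qed

lemma affine_interp:
  fixes t :: "'k::field"
  assumes "K*t1 + M = 0" "K*t2 + M = 0" "t1 \<noteq> t2"
  shows "K*t + M = 0"
proof -
  have "K * (t1 - t2) = (K*t1 + M) - (K*t2 + M)" by (simp add: algebra_simps)
  then have "K * (t1 - t2) = 0" using assms(1,2) by simp
  then have "K = 0" using assms(3) by simp
  then show ?thesis using assms(1) by simp
qed

lemma lin_interp:
  fixes t :: "'k::field"
  assumes "(t1*k1+m1) + (t1*k2+m2) = (t1*k3+m3) + (t1*k4+m4)"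
    "(t2*k1+m1) + (t2*k2+m2) = (t2*k3+m3) + (t2*k4+m4)" "t1 \<noteq> t2"
  shows "(t*k1+m1) + (t*k2+m2) = (t*k3+m3) + (t*k4+m4)"
  using affine_interp[of "k1+k2-k3-k4" t1 "m1+m2-m3-m4" t2 t] assms lin_iff by metis

lemma midpt_eq_iff:
  assumes "(2::'k::field) \<noteq> 0"
  shows "midpt p q = midpt r (s::'k\<times>'k) \<longleftrightarrow> fst p + fst q = fst r + fst s \<and> snd p + snd q = snd r + snd s"
  unfolding midpt_def by (simp only: prod_eq_iff fst_conv snd_conv divide_cancel_right assms simp_thms)

lemma par_Lc_same: "(a::'k::field) \<noteq> 0 \<or> b \<noteq> 0 \<Longrightarrow> parallel (Lc a b t) (Lc a b s)"
  using par_Lc[of a b a b t s] by simp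

lemma meet_affine:
  fixes a b :: "'k::field"
  assumes X: "is_line X" and ab: "a \<noteq> 0 \<or> b \<noteq> 0" and np: "\<not> parallel (Lc a b 0) X"
  shows "\<exists>k m k' m'. \<forall>t. meet (Lc a b t) X = Fin (t*k + m, t*k' + m')"
proof -
  obtain a' b' c' where ab': "a' \<noteq> 0 \<or> b' \<noteq> 0" and XL: "X = Lc a' b' c'" using X by (rule lineE)
  define D where "D = a * b' - a' * b"
  have D: "D \<noteq> 0" using np par_Lc[OF ab ab'] XL unfolding D_def by simp
  have dv: "\<And>u v x y d. u * (x / d) + v * (y / d) = (u * x + v * y) / (d::'k)"
    by (simp add: add_divide_distrib)
  have "meet (Lc a b t) X = Fin ((t*b' - c'*b)/D, (a*c' - a'*t)/D)" for t
  proof (rule meet_fin[OF Lc_line[OF ab] X])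
    show "\<not> parallel (Lc a b t) X"
    proof
      assume "parallel (Lc a b t) X"
      then have "parallel (Lc a b 0) X" using par_trans[OF par_Lc_same[OF ab, of 0 t]] by blast
      then show False using np by blast
    qed
    have "a*(t*b' - c'*b) + b*(a*c' - a'*t) = t * D" unfolding D_def by (simp add: algebra_simps)
    then have "a*((t*b' - c'*b)/D) + b*((a*c' - a'*t)/D) = (t * D) / D"
      unfolding dv by simp
    then show "((t*b' - c'*b)/D, (a*c' - a'*t)/D) \<in> Lc a b t" using D by simp
    have "a'*(t*b' - c'*b) + b'*(a*c' - a'*t) = c' * D" unfolding D_def by (simp add: algebra_simps)
    then have "a'*((t*b' - c'*b)/D) + b'*((a*c' - a'*t)/D) = (c' * D) / D"
      unfolding dv by simp
    then show "((t*b' - c'*b)/D, (a*c' - a'*t)/D) \<in> X" using D XL by simp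
  qed
  moreover have "(t*b' - c'*b)/D = t*(b'/D) + (-(c'*b)/D)" "(a*c' - a'*t)/D = t*(-a'/D) + a*c'/D" for t
    by (simp_all add: diff_divide_distrib)
  ultimately have "\<forall>t. meet (Lc a b t) X = Fin (t*(b'/D) + (-(c'*b)/D), t*(-a'/D) + a*c'/D)" by simp
  then show ?thesis by (intro exI)
qed

lemma npar_shift:
  assumes ab: "(a::'k::field) \<noteq> 0 \<or> b \<noteq> 0" and np: "\<not> parallel (Lc a b 0) X"
  shows "\<not> parallel (Lc a b s) X" "Lc a b s \<noteq> X"
proof -
  show n: "\<not> parallel (Lc a b s) X"
  proof
    assume "parallel (Lc a b s) X"
    then have "parallel (Lc a b 0) X" using par_trans[OF par_Lc_same[OF ab, of 0 s]] by blast
    then show False using np by blast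
  qed
  show "Lc a b s \<noteq> X" using n par_refl by metis
qed

lemma FAM:
  fixes a b t1 t2 t :: "'k::field"
  assumes Q: "quadrilateral A B A' B'" and c2: "(2::'k) \<noteq> 0" and ab: "a \<noteq> 0 \<or> b \<noteq> 0"
    and nA: "\<not> parallel (Lc a b 0) A" and nB: "\<not> parallel (Lc a b 0) B"
    and nA': "\<not> parallel (Lc a b 0) A'" and nB': "\<not> parallel (Lc a b 0) B'"
    and b1: "bisects A B A' B' (Lc a b t1)" and b2: "bisects A B A' B' (Lc a b t2)"
    and t12: "t1 \<noteq> t2"
  shows "bisects A B A' B' (Lc a b t)"
proof -
  note q = quadD[OF Q]
  obtain kA mA kA2 mA2 where hA: "\<forall>s. meet (Lc a b s) A = Fin (s*kA + mA, s*kA2 + mA2)"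
    using meet_affine[OF q(1) ab nA] by blast
  obtain kB mB kB2 mB2 where hB: "\<forall>s. meet (Lc a b s) B = Fin (s*kB + mB, s*kB2 + mB2)"
    using meet_affine[OF q(2) ab nB] by blast
  obtain kC mC kC2 mC2 where hC: "\<forall>s. meet (Lc a b s) A' = Fin (s*kC + mC, s*kC2 + mC2)"
    using meet_affine[OF q(3) ab nA'] by blast
  obtain kD mD kD2 mD2 where hD: "\<forall>s. meet (Lc a b s) B' = Fin (s*kD + mD, s*kD2 + mD2)"
    using meet_affine[OF q(4) ab nB'] by blast
  have cr: "crosses (Lc a b s) A A' \<and> crosses (Lc a b s) B B'" for s
    using npar_shift[OF ab nA] npar_shift[OF ab nB] npar_shift[OF ab nA'] npar_shift[OF ab nB']
    unfolding crosses_def by blast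
  have iff: "bisects A B A' B' (Lc a b s) \<longleftrightarrow>
      (s*kA + mA) + (s*kC + mC) = (s*kB + mB) + (s*kD + mD) \<and>
      (s*kA2 + mA2) + (s*kC2 + mC2) = (s*kB2 + mB2) + (s*kD2 + mD2)" for s
  proof -
    have "mid (Lc a b s) A A' = Fin (midpt (s*kA + mA, s*kA2 + mA2) (s*kC + mC, s*kC2 + mC2))"
      using mid_fin hA hC by blast
    moreover have "mid (Lc a b s) B B' = Fin (midpt (s*kB + mB, s*kB2 + mB2) (s*kD + mD, s*kD2 + mD2))"
      using mid_fin hB hD by blast
    ultimately show ?thesis unfolding bisects_def using cr[of s] Lc_line[OF ab] midpt_eq_iff[OF c2]
      by simp
  qed
  show ?thesis unfolding iff using b1 b2 t12 lin_interp unfolding iff by metis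
qed

lemma line_nonempty:
  assumes "is_line M" obtains p where "p \<in> M"
proof -
  obtain a b c where ab: "a \<noteq> 0 \<or> b \<noteq> 0" and M: "M = Lc a b c" using assms by (rule lineE)
  show ?thesis
  proof (cases "a = 0")
    case True
    then have "b \<noteq> 0" using ab by simp
    then show ?thesis using that[of "(0, c / b)"] True M by simp
  next
    case False
    then show ?thesis using that[of "(c / a, 0)"] M by simp
  qed
qed

lemma par_level:
  assumes ab: "(a::'k::field) \<noteq> 0 \<or> b \<noteq> 0" and M: "is_line M" and p: "parallel (Lc a b c) M"
  shows "\<exists>t. M = Lc a b t"
proof -
  obtain p0 where p0: "p0 \<in> M" using M by (rule line_nonempty)
  define t where "t = a * fst p0 + b * snd p0"
  have "p0 \<in> Lc a b t" unfolding t_def by simp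
  moreover have "parallel (Lc a b t) M" using par_trans[OF par_Lc_same[OF ab] p] .
  ultimately have "Lc a b t = M" using par_common_eq[OF Lc_line[OF ab] M] p0 by blast
  then show ?thesis by blast
qed

lemma diag_rot2: "diag1 A' B' A B = diag1 A B A' B'" "diag2 A' B' A B = diag2 A B A' B'"
  unfolding diag1_def diag2_def by (simp_all add: line_through_sym)

lemma quad_P24:
  assumes Q: "quadrilateral A B A' B'"
  shows "vtx B A' \<noteq> vtx B' A" "is_line (diag2 A B A' B')"
    "vtx B A' \<in> diag2 A B A' B'" "vtx B' A \<in> diag2 A B A' B'"
    "vtx B A' \<in> B" "vtx B A' \<in> A'" "vtx B' A \<in> B'" "vtx B' A \<in> A"
  using quad_P13[OF quad_rot[OF Q]] diag_rot(1) by metis+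

lemma ndpar_A:
  assumes Q: "quadrilateral A B A' B'" and dd: "parallel (diag1 A B A' B') (diag2 A B A' B')"
  shows "\<not> parallel (diag1 A B A' B') A"
proof
  assume p: "parallel (diag1 A B A' B') A"
  note q = quadD[OF Q]
  note P = quad_P13[OF Q]
  note R = quad_P24[OF Q]
  have d1: "diag1 A B A' B' = A" using par_common_eq[OF P(2) q(1) p P(3) P(5)] .
  have "vtx A' B' \<in> A" using P(4) d1 by simp
  then have e: "vtx B' A = vtx A' B'" using vtx_eq[OF q(4,1,14) P(8)] by simp
  have "diag2 A B A' B' = A'"
    using two_points[OF q(3) R(1) R(6)] R(4) e P(7) unfolding diag2_def by simp
  then have "parallel A A'" using dd d1 by simp
  then have "A = A'" using par_common_eq[OF q(1,3)] \<open>vtx A' B' \<in> A\<close> P(7) by blast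
  then show False using q(6) by simp
qed

lemma ndpar_all:
  assumes Q: "quadrilateral A B A' B'" and dd: "parallel (diag1 A B A' B') (diag2 A B A' B')"
  shows "\<not> parallel (diag1 A B A' B') A" "\<not> parallel (diag1 A B A' B') B"
    "\<not> parallel (diag1 A B A' B') A'" "\<not> parallel (diag1 A B A' B') B'"
proof -
  have Q2: "quadrilateral A' B' A B" using quad_rot[OF quad_rot[OF Q]] .
  show "\<not> parallel (diag1 A B A' B') A" using ndpar_A[OF Q dd] .
  show "\<not> parallel (diag1 A B A' B') B" using ndpar_A[OF quad_refl[OF Q]] dd diag_refl by metis
  show "\<not> parallel (diag1 A B A' B') A'" using ndpar_A[OF Q2] dd diag_rot2 by metis
  show "\<not> parallel (diag1 A B A' B') B'" using ndpar_A[OF quad_refl[OF Q2]] dd diag_rot2 diag_refl by metis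
qed

lemma diag_ne:
  assumes Q: "quadrilateral A B A' B'" and dd: "parallel (diag1 A B A' B') (diag2 A B A' B')"
  shows "diag1 A B A' B' \<noteq> diag2 A B A' B'"
proof
  assume e: "diag1 A B A' B' = diag2 A B A' B'"
  note q = quadD[OF Q]
  note P = quad_P13[OF Q]
  note R = quad_P24[OF Q]
  note n = ndpar_all[OF Q dd]
  show False
  proof (cases "vtx A B = vtx B A'")
    case False
    then have "B = diag1 A B A' B'" using two_points[OF q(2) False P(6) R(5)] two_points[OF P(2) False P(3)] R(3) e by simp
    then show False using n(2) par_refl by metis
  next
    case True
    have "vtx A B \<noteq> vtx B' A"
    proof
      assume "vtx A B = vtx B' A"
      then show False using q(19)[of "vtx A B"] P(5,6) True R(6,7) by metis
    qed
    then have "A = diag1 A B A' B'" using two_points[OF q(1) _ P(5) R(8)] two_points[OF P(2) _ P(3)] R(4) e by simp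
    then show False using n(1) par_refl by metis
  qed
qed

lemma partH:
  assumes Q: "quadrilateral A B A' B'" and c2: "(2::'k::field) \<noteq> 0"
    and dd: "parallel (diag1 A B A' B') (diag2 A B A' B')"
    and l: "is_line (l :: ('k \<times> 'k) set)" and pl: "parallel l (diag1 A B A' B')"
  shows "bisects A B A' B' l"
proof -
  note P = quad_P13[OF Q]
  note R = quad_P24[OF Q]
  note n = ndpar_all[OF Q dd]
  obtain a b c where ab: "a \<noteq> 0 \<or> b \<noteq> 0" and lL: "l = Lc a b c" using l by (rule lineE)
  obtain t1 where t1: "diag1 A B A' B' = Lc a b t1" using par_level[OF ab P(2)] pl lL by blast
  have "parallel (Lc a b c) (diag2 A B A' B')" using par_trans[OF pl dd] lL by simp
  then obtain t2 where t2: "diag2 A B A' B' = Lc a b t2" using par_level[OF ab R(2)] by blast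
  have t12: "t1 \<noteq> t2" using diag_ne[OF Q dd] t1 t2 by auto
  have p0: "parallel (Lc a b 0) (diag1 A B A' B')" using t1 par_Lc_same[OF ab] by simp
  have np: "\<not> parallel (Lc a b 0) X" if "\<not> parallel (diag1 A B A' B') X" for X
    using that p0 unfolding parallel_def by simp
  have b1: "bisects A B A' B' (Lc a b t1)" using diag1_bis[OF Q] t1 by simp
  have b2: "bisects A B A' B' (Lc a b t2)" using diag2_bis[OF Q] t2 by simp
  show ?thesis using FAM[OF Q c2 ab np[OF n(1)] np[OF n(2)] np[OF n(3)] np[OF n(4)] b1 b2 t12, of c] lL
    by simp
qed

lemma pp_abs:
  assumes nXY: "\<not> parallel X Y"
    and fin: "\<And>l. l \<in> {l1, l2} \<Longrightarrow> crosses l X Y \<Longrightarrow> \<not> parallel l X \<and> \<not> parallel l Y"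
    and ne: "l1 \<noteq> l2" and p12: "parallel l1 l2" and p1: "parallel l1 X"
  shows False
proof -
  obtain l where l: "l \<in> {l1, l2}" "l \<noteq> X" using ne by blast
  have pl: "parallel l X" using l(1) p1 p12 unfolding parallel_def by auto
  have "l \<noteq> Y" using pl nXY unfolding parallel_def by auto
  moreover have "\<not> parallel l Y" using pl nXY unfolding parallel_def by simp
  ultimately have "crosses l X Y" using l(2) unfolding crosses_def by blast
  then show False using fin[OF l(1)] pl by blast
qed

lemma part4:
  assumes Q: "quadrilateral A B A' B'" and c2: "(2::'k::field) \<noteq> 0"
    and l: "is_line (l :: ('k \<times> 'k) set)"
    and h: "(parallel A A' \<and> parallel l A) \<or> (parallel B B' \<and> parallel l B) \<or>
           (parallel (diag1 A B A' B') (diag2 A B A' B') \<and> parallel l (diag1 A B A' B'))"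
  shows "bisects A B A' B' l"
proof -
  consider "parallel A A' \<and> parallel l A" | "parallel B B' \<and> parallel l B"
    | "parallel (diag1 A B A' B') (diag2 A B A' B') \<and> parallel l (diag1 A B A' B')"
    using h by blast
  then show ?thesis
  proof cases
    case 1
    then have "\<not> crosses l A A'" unfolding crosses_def parallel_def by simp
    then show ?thesis using l unfolding bisects_def by simp
  next
    case 2
    then have "\<not> crosses l B B'" unfolding crosses_def parallel_def by simp
    then show ?thesis using l unfolding bisects_def by simp
  next
    case 3
    then show ?thesis using partH[OF Q c2 _ l] by blast
  qed
qed

lemma part3f:
  assumes Q: "quadrilateral A B A' B'" and c2: "(2::'k::field) \<noteq> 0"
    and l1: "is_line (l1 :: ('k \<times> 'k) set)" and l2: "is_line l2" and ne: "l1 \<noteq> l2"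
    and p12: "parallel l1 l2"
    and b1: "bisects A B A' B' l1" and b2: "bisects A B A' B' l2"
  shows "(parallel A A' \<and> parallel l1 A) \<or> (parallel B B' \<and> parallel l1 B) \<or>
           (parallel (diag1 A B A' B') (diag2 A B A' B') \<and> parallel l1 (diag1 A B A' B'))"
proof -
  note q = quadD[OF Q]
  have bb: "bisects A B A' B' l" if "l \<in> {l1, l2}" for l using that b1 b2 by auto
  have finA: "\<not> parallel l A \<and> \<not> parallel l A'" if "l \<in> {l1, l2}" "crosses l A A'" for l
    using bis_cross_fin(1)[OF Q bb[OF that(1)] that(2)] .
  have finB: "\<not> parallel l B \<and> \<not> parallel l B'" if "l \<in> {l1, l2}" "crosses l B B'" for l
    using bis_cross_fin(2)[OF Q bb[OF that(1)] that(2)] .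
  have finA': "\<not> parallel l A' \<and> \<not> parallel l A" if "l \<in> {l1, l2}" "crosses l A' A" for l
    using finA[OF that(1)] that(2) unfolding crosses_sym[of l A' A] by simp
  have finB': "\<not> parallel l B' \<and> \<not> parallel l B" if "l \<in> {l1, l2}" "crosses l B' B" for l
    using finB[OF that(1)] that(2) unfolding crosses_sym[of l B' B] by simp
  show ?thesis
  proof (cases "parallel l1 A \<or> parallel l1 A'")
    case True
    have "parallel A A'"
    proof (rule ccontr)
      assume n: "\<not> parallel A A'"
      then have n': "\<not> parallel A' A" unfolding parallel_def by auto
      show False using True
      proof
        assume "parallel l1 A" then show False using pp_abs[OF n finA ne p12] by blast
      next
        assume "parallel l1 A'" then show False using pp_abs[OF n' finA' ne p12] by blast
      qed
    qed
    then have "parallel l1 A" using True unfolding parallel_def by auto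
    then show ?thesis using \<open>parallel A A'\<close> by blast
  next
    case nA: False
    show ?thesis
    proof (cases "parallel l1 B \<or> parallel l1 B'")
      case True
      have "parallel B B'"
      proof (rule ccontr)
          assume n: "\<not> parallel B B'"
        then have n': "\<not> parallel B' B" unfolding parallel_def by auto
        show False using True
        proof
          assume "parallel l1 B" then show False using pp_abs[OF n finB ne p12] by blast
        next
          assume "parallel l1 B'" then show False using pp_abs[OF n' finB' ne p12] by blast
        qed
      qed
      then have "parallel l1 B" using True unfolding parallel_def by auto
      then show ?thesis using \<open>parallel B B'\<close> by blast
    next
      case nB: False
      obtain a b c where ab: "a \<noteq> 0 \<or> b \<noteq> 0" and lL: "l1 = Lc a b c" using l1 by (rule lineE)
      obtain t2 where t2: "l2 = Lc a b t2" using par_level[OF ab l2] p12 lL by blast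
      have ct: "c \<noteq> t2" using ne lL t2 by auto
      have p0: "parallel (Lc a b 0) l1" using lL par_Lc_same[OF ab] by simp
      have np: "\<not> parallel (Lc a b 0) X" if "\<not> parallel l1 X" for X
        using that p0 unfolding parallel_def by simp
      have npA: "\<not> parallel (Lc a b 0) A" "\<not> parallel (Lc a b 0) A'"
        "\<not> parallel (Lc a b 0) B" "\<not> parallel (Lc a b 0) B'" using np nA nB by auto
      have b1': "bisects A B A' B' (Lc a b c)" using b1 lL by simp
      have b2': "bisects A B A' B' (Lc a b t2)" using b2 t2 by simp
      have allb: "bisects A B A' B' (Lc a b t)" for t
        using FAM[OF Q c2 ab npA(1) npA(3) npA(2) npA(4) b1' b2' ct] .
      have sne: "Lc a b t \<noteq> A" "Lc a b t \<noteq> A'" "Lc a b t \<noteq> B" "Lc a b t \<noteq> B'" for t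
        using npar_shift(2)[OF ab npA(1)] npar_shift(2)[OF ab npA(2)]
          npar_shift(2)[OF ab npA(3)] npar_shift(2)[OF ab npA(4)] by blast+
      define t0 where "t0 = a * fst (vtx A B) + b * snd (vtx A B)"
      have "vtx A B \<in> Lc a b t0" unfolding t0_def by simp
      then have "Lc a b t0 \<in> {A, B, A', B', diag1 A B A' B'}" using V1[OF Q allb[of t0] _ c2] by blast
      then have d1: "Lc a b t0 = diag1 A B A' B'" using sne[of t0] by simp
      define s0 where "s0 = a * fst (vtx B A') + b * snd (vtx B A')"
      have "vtx B A' \<in> Lc a b s0" unfolding s0_def by simp
      moreover have "bisects B A' B' A (Lc a b s0)" using allb[of s0] bisects_rot[of A B A' B'] by simp
      ultimately have "Lc a b s0 \<in> {B, A', B', A, diag1 B A' B' A}" using V1[OF quad_rot[OF Q] _ _ c2] by blast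
      then have d2: "Lc a b s0 = diag2 A B A' B'" using sne[of s0] diag_rot(1)[of B A' B' A] by simp
      have "parallel l1 (diag1 A B A' B')" using par_Lc_same[OF ab, of c t0] d1 lL by simp
      moreover have "parallel l1 (diag2 A B A' B')" using par_Lc_same[OF ab, of c s0] d2 lL by simp
      ultimately show ?thesis unfolding parallel_def by simp
    qed
  qed
qed

lemma part2:
  assumes Q: "quadrilateral A B A' B'" and c2: "(2::'k::field) \<noteq> 0"
    and l: "is_line (l :: ('k \<times> 'k) set)" and v: "\<exists>v \<in> vertices A B A' B'. v \<in> l"
  shows "bisects A B A' B' l \<longleftrightarrow> l \<in> {A, B, A', B', diag1 A B A' B', diag2 A B A' B'}"
proof
  assume "l \<in> {A, B, A', B', diag1 A B A' B', diag2 A B A' B'}"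
  then show "bisects A B A' B' l" using sides_bis[OF Q] diag1_bis[OF Q] diag2_bis[OF Q] by blast
next
  assume b: "bisects A B A' B' l"
  have Q1: "quadrilateral B A' B' A" using quad_rot[OF Q] .
  have Q2: "quadrilateral A' B' A B" using quad_rot[OF Q1] .
  have Q3: "quadrilateral B' A B A'" using quad_rot[OF Q2] .
  have b1: "bisects B A' B' A l" using b bisects_rot by blast
  have b2: "bisects A' B' A B l" using b1 bisects_rot by blast
  have b3: "bisects B' A B A' l" using b2 bisects_rot by blast
  have e3: "diag1 B' A B A' = diag2 A B A' B'" using diag_rot(1)[of B' A B A'] diag_rot2(2) by simp
  from v consider "vtx A B \<in> l" | "vtx B A' \<in> l" | "vtx A' B' \<in> l" | "vtx B' A \<in> l"
    unfolding vertices_def by blast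
  then show "l \<in> {A, B, A', B', diag1 A B A' B', diag2 A B A' B'}"
  proof cases
    case 1 then show ?thesis using V1[OF Q b _ c2] by blast
  next
    case 2 then show ?thesis using V1[OF Q1 b1 _ c2] diag_rot(1) by blast
  next
    case 3 then show ?thesis using V1[OF Q2 b2 _ c2] diag_rot2(1) by blast
  next
    case 4 then show ?thesis using V1[OF Q3 b3 _ c2] e3 by blast
  qed
qed

theorem proposition3p2:
  fixes A B A' B' :: "('k::field \<times> 'k) set"
  assumes char: "(2::'k) \<noteq> 0"
    and Q: "quadrilateral A B A' B'"
  shows
    "(\<forall>l. bisects A B A' B' l \<longrightarrow> (\<exists>p. midQ A B A' B' l = Fin p))
   \<and> (\<forall>l. is_line l \<and> (\<exists>v \<in> vertices A B A' B'. v \<in> l) \<longrightarrow>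
          (bisects A B A' B' l \<longleftrightarrow>
             l \<in> {A, B, A', B', diag1 A B A' B', diag2 A B A' B'}))
   \<and> (\<forall>l1 l2. is_line l1 \<and> is_line l2 \<and> l1 \<noteq> l2 \<and> parallel l1 l2 \<longrightarrow>
          (bisects A B A' B' l1 \<and> bisects A B A' B' l2 \<longleftrightarrow>
             (parallel A A' \<and> parallel l1 A) \<or> (parallel B B' \<and> parallel l1 B) \<or>
             (parallel (diag1 A B A' B') (diag2 A B A' B') \<and> parallel l1 (diag1 A B A' B'))))
   \<and> (\<forall>l. is_line l \<and>
          ((parallel A A' \<and> parallel l A) \<or> (parallel B B' \<and> parallel l B) \<or>
           (parallel (diag1 A B A' B') (diag2 A B A' B') \<and> parallel l (diag1 A B A' B')))
          \<longrightarrow> bisects A B A' B' l)"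
proof (intro conjI allI impI)
  show "\<exists>p. midQ A B A' B' l = Fin p" if "bisects A B A' B' l" for l
    using part1[OF Q that] .
  show "bisects A B A' B' l \<longleftrightarrow> l \<in> {A, B, A', B', diag1 A B A' B', diag2 A B A' B'}"
    if "is_line l \<and> (\<exists>v \<in> vertices A B A' B'. v \<in> l)" for l
    using part2[OF Q char] that by blast
  show "bisects A B A' B' l" if "is_line l \<and>
          ((parallel A A' \<and> parallel l A) \<or> (parallel B B' \<and> parallel l B) \<or>
           (parallel (diag1 A B A' B') (diag2 A B A' B') \<and> parallel l (diag1 A B A' B')))" for l
    using part4[OF Q char] that by blast
  fix l1 l2 :: "('k \<times> 'k) set"
  assume h: "is_line l1 \<and> is_line l2 \<and> l1 \<noteq> l2 \<and> parallel l1 l2"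
  show "bisects A B A' B' l1 \<and> bisects A B A' B' l2 \<longleftrightarrow>
             (parallel A A' \<and> parallel l1 A) \<or> (parallel B B' \<and> parallel l1 B) \<or>
             (parallel (diag1 A B A' B') (diag2 A B A' B') \<and> parallel l1 (diag1 A B A' B'))"
  proof
    assume "bisects A B A' B' l1 \<and> bisects A B A' B' l2"
    then show "(parallel A A' \<and> parallel l1 A) \<or> (parallel B B' \<and> parallel l1 B) \<or>
             (parallel (diag1 A B A' B') (diag2 A B A' B') \<and> parallel l1 (diag1 A B A' B'))"
      using part3f[OF Q char] h by blast
  next
    assume d: "(parallel A A' \<and> parallel l1 A) \<or> (parallel B B' \<and> parallel l1 B) \<or>
             (parallel (diag1 A B A' B') (diag2 A B A' B') \<and> parallel l1 (diag1 A B A' B'))"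
    then have d2: "(parallel A A' \<and> parallel l2 A) \<or> (parallel B B' \<and> parallel l2 B) \<or>
             (parallel (diag1 A B A' B') (diag2 A B A' B') \<and> parallel l2 (diag1 A B A' B'))"
      using h unfolding parallel_def by auto
    show "bisects A B A' B' l1 \<and> bisects A B A' B' l2"
      using part4[OF Q char _ d] part4[OF Q char _ d2] h by blast
  qed
qed

end
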